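(* Let $\mathcal D$ be a database schema and let $\{P_1,\ldots,P_k\}\subseteq\mathcal D$ be the maximal set of relation symbols of $\mathcal D$ such that the relation for each of $P_1,\ldots,P_k$ is required to be set valued in all instances $D$ over $\mathcal D$. Given CQ queries $Q_1,Q_2$ over $\mathcal D$, let $Q_1'$ (resp. $Q_2'$) be obtained from $Q_1$ (resp. $Q_2$) by removing all duplicate subgoals whose predicates correspond to $P_1,\ldots,P_k$ (keeping one copy of each). Then $Q_1(D,B)=Q_2(D,B)$ as bags for every bag-valued instance $D$ of $\mathcal D$ in which $P_1,\ldots,P_k$ are set valued if and only if $Q_1'$ and $Q_2'$ are isomorphic.
   Context: A database instance over $\mathcal D$ assigns to each relation symbol a finite bag (multiset) of tuples; a relation is set valued if every tuple has multiplicity $1$. A CQ query is $Q(\bar X):-p_1(\bar X_1),\dots,p_n(\bar X_n)$, $n\ge1$, with relational atoms (subgoals, possibly repeated) over $\mathcal D$ and every head variable occurring in the body. Under bag semantics, each assignment $\gamma$ of the variables to constants such that every $\gamma(\bar X_i)$ is a tuple of the relation $P_i$ of $p_i$ contributes $\prod_i m_i$ copies of $\gamma(\bar X)$ to the bag $Q(D,B)$, where $m_i$ is the multiplicity of $\gamma(\bar X_i)$ in $P_i$. Two CQ queries are isomorphic if a bijective renaming of variables maps one onto the other (head onto head, body onto body as multisets of atoms). *)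

theory Defs
  imports Main "HOL-Library.Multiset"
begin

type_synonym ('r,'v) atom = "'r \<times> 'v list"

record ('r,'v) cq =
  head :: "'v list"
  body :: "('r,'v) atom multiset"

definition cq_vars :: "('r,'v) cq \<Rightarrow> 'v set" where
  "cq_vars Q = (\<Union>a\<in>set_mset (body Q). set (snd a))"

definition cq_over :: "'r set \<Rightarrow> ('r \<Rightarrow> nat) \<Rightarrow> ('r,'v) cq \<Rightarrow> bool" where
  "cq_over Sch ar Q \<longleftrightarrow>
     body Q \<noteq> {#} \<and>
     (\<forall>a\<in>set_mset (body Q). fst a \<in> Sch \<and> length (snd a) = ar (fst a)) \<and>
     set (head Q) \<subseteq> cq_vars Q"

text \<open>A (bag-valued) instance: multiplicity of each tuple in each relation.\<close>

type_synonym ('r,'c) inst = "'r \<Rightarrow> 'c list \<Rightarrow> nat"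

definition instance_over :: "'r set \<Rightarrow> ('r \<Rightarrow> nat) \<Rightarrow> ('r,'c) inst \<Rightarrow> bool" where
  "instance_over Sch ar D \<longleftrightarrow>
     finite {(p,t). D p t > 0} \<and>
     (\<forall>p t. D p t > 0 \<longrightarrow> p \<in> Sch \<and> length t = ar p)"

definition set_valued_on :: "'r set \<Rightarrow> ('r,'c) inst \<Rightarrow> bool" where
  "set_valued_on S D \<longleftrightarrow> (\<forall>p\<in>S. \<forall>t. D p t \<le> 1)"

definition adom :: "('r,'c) inst \<Rightarrow> 'c set" where
  "adom D = {c. \<exists>p t. D p t > 0 \<and> c \<in> set t}"

text \<open>Assignments relevant for Q over D: variables of Q go to the active domain
  (other assignments contribute multiplicity 0), others are fixed to undefined.\<close>

definition assignments :: "('r,'v) cq \<Rightarrow> ('r,'c) inst \<Rightarrow> ('v \<Rightarrow> 'c) set" where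
  "assignments Q D = {\<gamma>. (\<forall>x\<in>cq_vars Q. \<gamma> x \<in> adom D) \<and> (\<forall>x. x \<notin> cq_vars Q \<longrightarrow> \<gamma> x = undefined)}"

definition bag_answer :: "('r,'v) cq \<Rightarrow> ('r,'c) inst \<Rightarrow> 'c list \<Rightarrow> nat" where
  "bag_answer Q D t =
     (\<Sum>\<gamma>\<in>assignments Q D.
        if map \<gamma> (head Q) = t
        then prod_mset (image_mset (\<lambda>(p,xs). D p (map \<gamma> xs)) (body Q))
        else 0)"

definition dedup :: "'r set \<Rightarrow> ('r,'v) cq \<Rightarrow> ('r,'v) cq" where
  "dedup S Q = Q\<lparr> body := filter_mset (\<lambda>a. fst a \<notin> S) (body Q)
                          + mset_set {a \<in> set_mset (body Q). fst a \<in> S} \<rparr>"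

definition cq_iso :: "('r,'v) cq \<Rightarrow> ('r,'v) cq \<Rightarrow> bool" where
  "cq_iso Q1 Q2 \<longleftrightarrow> (\<exists>f. inj_on f (cq_vars Q1) \<and> map f (head Q1) = head Q2 \<and>
      image_mset (\<lambda>(p,xs). (p, map f xs)) (body Q1) = body Q2)"

end

theory Submission
  imports Defs "HOL-Library.FuncSet" "HOL-Computational_Algebra.Polynomial"
begin


lemma geo_bound:
  fixes B :: nat assumes "B \<ge> 1"
  shows "(\<Sum>i<n. (B-1)*B^i) < B^n"
proof (induction n)
  case 0 then show ?case by simp
next
  case (Suc n)
  have "(\<Sum>i<Suc n. (B-1)*B^i) = (\<Sum>i<n. (B-1)*B^i) + (B-1)*B^n" by simp
  also have "\<dots> < B^n + (B-1)*B^n" using Suc by simp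
  also have "\<dots> = B * B^n" using assms by (simp add: algebra_simps)
  finally show ?case by simp
qed

lemma digit_bound:
  fixes B :: nat
  assumes "B \<ge> 1" "finite S" "inj_on idx S" "\<forall>a\<in>S. idx a < n \<and> c a < B"
  shows "(\<Sum>a\<in>S. c a * B^idx a) < B^n"
proof -
  have "(\<Sum>a\<in>S. c a * B^idx a) \<le> (\<Sum>a\<in>S. (B-1) * B^idx a)"
    by (rule sum_mono) (use assms in auto)
  also have "\<dots> = (\<Sum>i\<in>idx ` S. (B-1)*B^i)"
    using assms(3) by (simp add: sum.reindex)
  also have "\<dots> \<le> (\<Sum>i<n. (B-1)*B^i)"
    by (rule sum_mono2) (use assms in auto)
  also have "\<dots> < B^n" by (rule geo_bound[OF assms(1)])
  finally show ?thesis .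
qed

lemma digits_unique:
  fixes B :: nat
  assumes "B \<ge> 1" "finite S"
  shows "inj_on idx S \<Longrightarrow> \<forall>a\<in>S. c a < B \<and> d a < B \<Longrightarrow>
     (\<Sum>a\<in>S. c a * B^idx a) = (\<Sum>a\<in>S. d a * B^idx a) \<Longrightarrow> \<forall>a\<in>S. c a = d a"
  using assms(2)
proof (induction S rule: finite_ranking_induct[where f = idx])
  case empty then show ?case by simp
next
  case (insert x S)
  show ?case
  proof (cases "x \<in> S")
    case True
    then show ?thesis using insert by (simp add: insert_absorb)
  next
    case False
    have inj: "inj_on idx S" using insert(4) by (auto intro: inj_on_subset)
    have lt: "\<forall>a\<in>S. idx a < idx x"
      using insert(2) insert(4) False by (metis inj_on_contraD insertCI insert_subset le_neq_implies_less subset_insertI)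
    have b1: "(\<Sum>a\<in>S. c a * B^idx a) < B^idx x"
      by (rule digit_bound) (use assms insert inj lt in auto)
    have b2: "(\<Sum>a\<in>S. d a * B^idx a) < B^idx x"
      by (rule digit_bound) (use assms insert inj lt in auto)
    have eq: "c x * B^idx x + (\<Sum>a\<in>S. c a * B^idx a) = d x * B^idx x + (\<Sum>a\<in>S. d a * B^idx a)"
      using insert(6) insert(1) False by simp
    have pos: "B^idx x > 0" using assms by simp
    have "(c x * B^idx x + (\<Sum>a\<in>S. c a * B^idx a)) div B^idx x = c x"
      using b1 pos by simp
    moreover have "(d x * B^idx x + (\<Sum>a\<in>S. d a * B^idx a)) div B^idx x = d x"
      using b2 pos by simp
    ultimately have cx: "c x = d x" using eq by metis
    with eq have "(\<Sum>a\<in>S. c a * B^idx a) = (\<Sum>a\<in>S. d a * B^idx a)" by simp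
    then have "\<forall>a\<in>S. c a = d a" using insert(3) inj insert(5) by auto
    with cx show ?thesis by auto
  qed
qed

lemma sum_mset_as_sum:
  assumes "finite K" "set_mset X \<subseteq> K"
  shows "sum_mset (image_mset f X) = (\<Sum>a\<in>K. count X a * f a)"
  using assms(2)
proof (induction X)
  case empty then show ?case by simp
next
  case (add x X)
  then have xK: "x \<in> K" by simp
  have "(\<Sum>a\<in>K. count (add_mset x X) a * f a) = (\<Sum>a\<in>K. count X a * f a + (if a = x then f x else 0))"
    by (rule sum.cong) (auto simp: algebra_simps)
  also have "\<dots> = (\<Sum>a\<in>K. count X a * f a) + f x"
    using xK assms(1) by (simp add: sum.distrib)
  finally show ?case using add by simp
qed

lemma poly_count:
  fixes f :: "'a \<Rightarrow> nat" and g :: "'b \<Rightarrow> nat"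
  assumes "finite X" "finite Y" "\<And>M::nat. (\<Sum>x\<in>X. M^f x) = (\<Sum>y\<in>Y. M^g y)"
  shows "card {x\<in>X. f x = E} = card {y\<in>Y. g y = E}"
proof -
  define p where "p = (\<Sum>x\<in>X. monom (1::int) (f x))"
  define q where "q = (\<Sum>y\<in>Y. monom (1::int) (g y))"
  have pv: "poly (p - q) (int M) = 0" for M
  proof -
    have "poly p (int M) = int (\<Sum>x\<in>X. M^f x)" by (simp add: p_def poly_sum poly_monom)
    moreover have "poly q (int M) = int (\<Sum>y\<in>Y. M^g y)" by (simp add: q_def poly_sum poly_monom)
    ultimately show ?thesis using assms(3)[of M] by simp
  qed
  have "p - q = 0"
  proof (rule ccontr)
    assume "p - q \<noteq> 0"
    then have "finite {x. poly (p - q) x = 0}" by (rule poly_roots_finite)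
    moreover have "range int \<subseteq> {x. poly (p - q) x = 0}" using pv by auto
    ultimately have "finite (range int)" by (rule finite_subset[rotated])
    then show False using finite_imageD[of int UNIV] by (simp add: inj_on_def)
  qed
  then have "coeff p E = coeff q E" by simp
  moreover have "coeff p E = int (card {x\<in>X. f x = E})"
    by (simp add: p_def coeff_sum coeff_monom assms(1) sum.If_cases) (simp add: Int_def)
  moreover have "coeff q E = int (card {y\<in>Y. g y = E})"
    by (simp add: q_def coeff_sum coeff_monom assms(2) sum.If_cases) (simp add: Int_def)
  ultimately show ?thesis by simp
qed

lemma ie_lemma:
  fixes G1 G2 :: "'a set \<Rightarrow> nat"
  assumes "finite KS" "\<And>T. T \<subseteq> KS \<Longrightarrow> (\<Sum>T'\<in>Pow T. G1 T') = (\<Sum>T'\<in>Pow T. G2 T')"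
  shows "T \<subseteq> KS \<Longrightarrow> G1 T = G2 T"
proof -
  assume "T \<subseteq> KS"
  then have "finite T" using assms(1) finite_subset by blast
  then show ?thesis using \<open>T \<subseteq> KS\<close>
  proof (induction T rule: finite_psubset_induct)
    case (psubset T)
    have fin: "finite (Pow T)" using psubset(1) by simp
    have h: "(\<Sum>T'\<in>Pow T - {T}. G1 T') = (\<Sum>T'\<in>Pow T - {T}. G2 T')"
      by (rule sum.cong) (use psubset in auto)
    have "G1 T + (\<Sum>T'\<in>Pow T - {T}. G1 T') = G2 T + (\<Sum>T'\<in>Pow T - {T}. G2 T')"
      using assms(2)[OF psubset(3)] fin sum.remove[of "Pow T" T G1] sum.remove[of "Pow T" T G2] by simp
    then show ?case using h by simp
  qed
qed



definition amap :: "('v \<Rightarrow> 'c) \<Rightarrow> ('r,'v) atom \<Rightarrow> ('r,'c) atom" where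
  "amap \<gamma> b = (fst b, map \<gamma> (snd b))"
definition nonS :: "'r set \<Rightarrow> ('r,'v) atom multiset \<Rightarrow> ('r,'v) atom multiset" where
  "nonS S B = filter_mset (\<lambda>b. fst b \<notin> S) B"
definition SAt :: "'r set \<Rightarrow> ('r,'v) atom multiset \<Rightarrow> ('r,'v) atom set" where
  "SAt S B = {b \<in> set_mset B. fst b \<in> S}"
definition cinst :: "('r,'c) atom set \<Rightarrow> 'r set \<Rightarrow> (('r,'c) atom \<Rightarrow> nat) \<Rightarrow> ('r,'c) atom set \<Rightarrow> nat \<Rightarrow> ('r,'c) inst" where
  "cinst K S e T M p ts = (if (p,ts)\<in>K then (if p\<in>S then (if (p,ts)\<in>T then 1 else 0) else M ^ e (p,ts)) else 0)"
definition Hs :: "('r,'v) cq \<Rightarrow> 'c set \<Rightarrow> 'c list \<Rightarrow> ('r,'c) atom set \<Rightarrow> ('v \<Rightarrow> 'c) set" where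
  "Hs Q C t0 K = {\<gamma> \<in> cq_vars Q \<rightarrow>\<^sub>E C. map \<gamma> (head Q) = t0 \<and> (\<forall>b\<in>#body Q. amap \<gamma> b \<in> K)}"
definition SIm :: "'r set \<Rightarrow> ('r,'v) cq \<Rightarrow> ('v \<Rightarrow> 'c) \<Rightarrow> ('r,'c) atom set" where
  "SIm S Q \<gamma> = amap \<gamma> ` SAt S (body Q)"
definition En :: "'r set \<Rightarrow> (('r,'c) atom \<Rightarrow> nat) \<Rightarrow> ('r,'v) cq \<Rightarrow> ('v \<Rightarrow> 'c) \<Rightarrow> nat" where
  "En S e Q \<gamma> = sum_mset (image_mset (e \<circ> amap \<gamma>) (nonS S (body Q)))"

lemma finite_cq_vars: "finite (cq_vars Q)"
  unfolding cq_vars_def by auto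

lemma assignments_PiE: "assignments Q D = cq_vars Q \<rightarrow>\<^sub>E adom D"
  unfolding assignments_def PiE_def Pi_def extensional_def by auto

lemma bag_answer_super:
  assumes "finite C" "adom D \<subseteq> C"
  shows "bag_answer Q D t = (\<Sum>\<gamma>\<in>cq_vars Q \<rightarrow>\<^sub>E C. if map \<gamma> (head Q) = t
        then prod_mset (image_mset (\<lambda>(p,xs). D p (map \<gamma> xs)) (body Q)) else 0)"
  unfolding bag_answer_def assignments_PiE
proof (rule sum.mono_neutral_left)
  show "finite (cq_vars Q \<rightarrow>\<^sub>E C)" using assms(1) finite_cq_vars by (intro finite_PiE) auto
  show "cq_vars Q \<rightarrow>\<^sub>E adom D \<subseteq> cq_vars Q \<rightarrow>\<^sub>E C" using assms(2) by (simp add: PiE_mono)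
  show "\<forall>\<gamma>\<in>(cq_vars Q \<rightarrow>\<^sub>E C) - (cq_vars Q \<rightarrow>\<^sub>E adom D).
       (if map \<gamma> (head Q) = t then prod_mset (image_mset (\<lambda>(p,xs). D p (map \<gamma> xs)) (body Q)) else 0) = 0"
  proof
    fix \<gamma> assume g: "\<gamma> \<in> (cq_vars Q \<rightarrow>\<^sub>E C) - (cq_vars Q \<rightarrow>\<^sub>E adom D)"
    then obtain x where x: "x \<in> cq_vars Q" "\<gamma> x \<notin> adom D"
      unfolding PiE_def Pi_def by auto
    then obtain b where b: "b \<in># body Q" "x \<in> set (snd b)" unfolding cq_vars_def by auto
    have "D (fst b) (map \<gamma> (snd b)) = 0"
    proof (rule ccontr)
      assume "D (fst b) (map \<gamma> (snd b)) \<noteq> 0"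
      then have "\<gamma> x \<in> adom D" unfolding adom_def using b(2)
        by (intro CollectI exI[of _ "fst b"] exI[of _ "map \<gamma> (snd b)"]) auto
      then show False using x by simp
    qed
    then have "0 \<in># image_mset (\<lambda>(p,xs). D p (map \<gamma> xs)) (body Q)"
      using b(1) by (cases b) (force)
    then show "(if map \<gamma> (head Q) = t then prod_mset (image_mset (\<lambda>(p,xs). D p (map \<gamma> xs)) (body Q)) else 0) = 0"
      by (simp add: prod_mset_zero_iff)
  qed
qed

lemma prod_cinst:
  "prod_mset (image_mset (\<lambda>(p,xs). cinst K S e T M p (map \<gamma> xs)) B) =
   (if \<forall>b\<in>#B. amap \<gamma> b \<in> K \<and> (fst b \<in> S \<longrightarrow> amap \<gamma> b \<in> T)
    then M ^ sum_mset (image_mset (e \<circ> amap \<gamma>) (nonS S B)) else 0)"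
proof (induction B)
  case empty then show ?case by (simp add: nonS_def)
next
  case (add b B)
  obtain p xs where b: "b = (p, xs)" by (cases b)
  show ?case using add by (auto simp: b cinst_def nonS_def amap_def power_add comp_def)
qed

lemma bag_answer_cinst:
  assumes "finite C" "\<forall>a\<in>K. set (snd a) \<subseteq> C"
  shows "bag_answer Q (cinst K S e T M) t0 = (\<Sum>\<gamma>\<in>{\<gamma>\<in>Hs Q C t0 K. SIm S Q \<gamma> \<subseteq> T}. M ^ En S e Q \<gamma>)"
proof -
  have ad: "adom (cinst K S e T M) \<subseteq> C"
  proof
    fix x assume "x \<in> adom (cinst K S e T M)"
    then obtain p t where "cinst K S e T M p t > 0" "x \<in> set t" unfolding adom_def by auto
    then have "(p,t) \<in> K" "x \<in> set t" unfolding cinst_def by (auto split: if_splits)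
    then show "x \<in> C" using assms(2) by force
  qed
  have fin: "finite (cq_vars Q \<rightarrow>\<^sub>E C)" using assms(1) finite_cq_vars by (intro finite_PiE) auto
  have "bag_answer Q (cinst K S e T M) t0 = (\<Sum>\<gamma>\<in>cq_vars Q \<rightarrow>\<^sub>E C.
      if map \<gamma> (head Q) = t0 \<and> (\<forall>b\<in>#body Q. amap \<gamma> b \<in> K) \<and> SIm S Q \<gamma> \<subseteq> T then M ^ En S e Q \<gamma> else 0)"
    unfolding bag_answer_super[OF assms(1) ad] prod_cinst
    by (rule sum.cong) (auto simp: SIm_def SAt_def En_def)
  also have "\<dots> = (\<Sum>\<gamma>\<in>{\<gamma>\<in>cq_vars Q \<rightarrow>\<^sub>E C. map \<gamma> (head Q) = t0 \<and> (\<forall>b\<in>#body Q. amap \<gamma> b \<in> K) \<and> SIm S Q \<gamma> \<subseteq> T}. M ^ En S e Q \<gamma>)"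
    using fin by (simp add: sum.inter_filter)
  also have "{\<gamma>\<in>cq_vars Q \<rightarrow>\<^sub>E C. map \<gamma> (head Q) = t0 \<and> (\<forall>b\<in>#body Q. amap \<gamma> b \<in> K) \<and> SIm S Q \<gamma> \<subseteq> T}
     = {\<gamma>\<in>Hs Q C t0 K. SIm S Q \<gamma> \<subseteq> T}" unfolding Hs_def by auto
  finally show ?thesis .
qed



lemma amap_comp: "amap (f \<circ> g) b = amap f (amap g b)"
  by (simp add: amap_def)

lemma extract_hom:
  fixes P Q :: "('r,'v) cq"
  assumes inf: "infinite (UNIV :: 'c set)"
    and Pov: "cq_over Sch ar P"
    and eq: "\<forall>D :: ('r,'c) inst. instance_over Sch ar D \<and> set_valued_on S D \<longrightarrow> bag_answer P D = bag_answer Q D"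
  shows "\<exists>h. h ` cq_vars Q \<subseteq> cq_vars P \<and> map h (head Q) = head P \<and>
     image_mset (amap h) (nonS S (body Q)) = nonS S (body P) \<and> amap h ` SAt S (body Q) = SAt S (body P)"
proof -
  define VP where "VP = cq_vars P"
  have finVP: "finite VP" unfolding VP_def by (rule finite_cq_vars)
  obtain Bc :: "'c set" where Bc: "finite Bc" "card Bc = card VP"
    using infinite_arbitrarily_large[OF inf] by blast
  obtain c :: "'v \<Rightarrow> 'c" where c: "inj_on c VP"
    using card_le_inj[OF finVP Bc(1)] Bc(2) by auto
  define C where "C = c ` VP"
  define K where "K = amap c ` set_mset (body P)"
  define t0 where "t0 = map c (head P)"
  define KS where "KS = {a\<in>K. fst a \<in> S}"
  have finK: "finite K" unfolding K_def by simp
  obtain idx :: "('r,'c) atom \<Rightarrow> nat" where idx: "inj_on idx K"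
    using finite_imp_inj_to_nat_seg[OF finK] by blast
  define Bs where "Bs = Suc (size (body P) + size (body Q))"
  define e where "e = (\<lambda>a. Bs ^ idx a)"
  have finC: "finite C" unfolding C_def using finVP by simp
  have bodyP_vars: "set (snd b) \<subseteq> VP" if "b \<in># body P" for b
    using that unfolding VP_def cq_vars_def by auto
  have KC: "\<forall>a\<in>K. set (snd a) \<subseteq> C"
    unfolding K_def C_def amap_def using bodyP_vars by auto
  have valid: "instance_over Sch ar (cinst K S e T M) \<and> set_valued_on S (cinst K S e T M)" for T M
  proof
    have sub: "{(p,t). cinst K S e T M p t > 0} \<subseteq> K" unfolding cinst_def by (auto split: if_splits)
    have "\<forall>p t. cinst K S e T M p t > 0 \<longrightarrow> p \<in> Sch \<and> length t = ar p"
    proof (intro allI impI)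
      fix p t assume "cinst K S e T M p t > 0"
      then have "(p,t) \<in> K" using sub by auto
      then obtain b where b: "b \<in># body P" "(p,t) = amap c b" unfolding K_def by auto
      then show "p \<in> Sch \<and> length t = ar p" using Pov unfolding cq_over_def amap_def by auto
    qed
    then show "instance_over Sch ar (cinst K S e T M)"
      unfolding instance_over_def using finite_subset[OF sub finK] by auto
    show "set_valued_on S (cinst K S e T M)" unfolding set_valued_on_def cinst_def by auto
  qed
  define F where "F = (\<lambda>(X::('r,'v) cq) T (M::nat). \<Sum>\<gamma>\<in>{\<gamma>\<in>Hs X C t0 K. SIm S X \<gamma> \<subseteq> T}. M ^ En S e X \<gamma>)"
  define G where "G = (\<lambda>(X::('r,'v) cq) T (M::nat). \<Sum>\<gamma>\<in>{\<gamma>\<in>Hs X C t0 K. SIm S X \<gamma> = T}. (M::nat) ^ En S e X \<gamma>)"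
  have FPQ: "F P T M = F Q T M" for T M
  proof -
    have "bag_answer P (cinst K S e T M) t0 = bag_answer Q (cinst K S e T M) t0"
      using eq valid[of T M] by simp
    then show ?thesis unfolding F_def
      using bag_answer_cinst[OF finC KC, of P S e T M t0] bag_answer_cinst[OF finC KC, of Q S e T M t0]
      by simp
  qed
  have finHs: "finite (Hs X C t0 K)" for X :: "('r,'v) cq"
  proof (rule finite_subset)
    show "Hs X C t0 K \<subseteq> cq_vars X \<rightarrow>\<^sub>E C" unfolding Hs_def by auto
    show "finite (cq_vars X \<rightarrow>\<^sub>E C)" using finC finite_cq_vars by (intro finite_PiE) auto
  qed
  have group: "F X T M = (\<Sum>T'\<in>Pow T. G X T' M)" if "finite T" for X :: "('r,'v) cq" and T M
  proof -
    have "(\<Sum>T'\<in>Pow T. sum (\<lambda>\<gamma>. M ^ En S e X \<gamma>) {x\<in>{\<gamma>\<in>Hs X C t0 K. SIm S X \<gamma> \<subseteq> T}. SIm S X x = T'})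
       = sum (\<lambda>\<gamma>. M ^ En S e X \<gamma>) {\<gamma>\<in>Hs X C t0 K. SIm S X \<gamma> \<subseteq> T}"
      by (rule sum.group) (use finHs[of X] that in auto)
    moreover have "(\<Sum>T'\<in>Pow T. sum (\<lambda>\<gamma>. M ^ En S e X \<gamma>) {x\<in>{\<gamma>\<in>Hs X C t0 K. SIm S X \<gamma> \<subseteq> T}. SIm S X x = T'})
       = (\<Sum>T'\<in>Pow T. G X T' M)"
      unfolding G_def by (rule sum.cong) (auto intro!: sum.cong)
    ultimately show ?thesis unfolding F_def by simp
  qed
  have finKS: "finite KS" unfolding KS_def using finK by simp
  have GPQ: "G P KS M = G Q KS M" for M
  proof -
    have "(\<Sum>T'\<in>Pow T. G P T' M) = (\<Sum>T'\<in>Pow T. G Q T' M)" if "T \<subseteq> KS" for T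
    proof -
      have "finite T" using that finKS finite_subset by blast
      then show ?thesis using group[of T P M] group[of T Q M] FPQ[of T M] by simp
    qed
    then show ?thesis using ie_lemma[OF finKS, of "\<lambda>T. G P T M" "\<lambda>T. G Q T M" KS] by simp
  qed
  define \<gamma>0 where "\<gamma>0 = restrict c VP"
  have g0b: "amap \<gamma>0 b = amap c b" if "b \<in># body P" for b
    using bodyP_vars[OF that] unfolding amap_def \<gamma>0_def by (auto intro!: map_cong)
  have headP: "set (head P) \<subseteq> VP" using Pov unfolding cq_over_def VP_def by auto
  have g0H: "\<gamma>0 \<in> Hs P C t0 K"
    unfolding Hs_def t0_def
  proof (intro CollectI conjI ballI)
    show "\<gamma>0 \<in> cq_vars P \<rightarrow>\<^sub>E C" unfolding \<gamma>0_def C_def VP_def by auto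
    show "map \<gamma>0 (head P) = map c (head P)" using headP unfolding \<gamma>0_def by (auto intro!: map_cong)
    fix b assume "b \<in># body P" then show "amap \<gamma>0 b \<in> K" using g0b unfolding K_def by auto
  qed
  have SAtP: "amap c ` SAt S (body P) = KS"
    unfolding KS_def K_def SAt_def amap_def by auto
  have g0S: "SIm S P \<gamma>0 = KS"
    unfolding SIm_def SAtP[symmetric] using g0b by (auto simp: SAt_def)
  define E0 where "E0 = En S e P \<gamma>0"
  have "card {\<gamma>\<in>{\<gamma>\<in>Hs P C t0 K. SIm S P \<gamma> = KS}. En S e P \<gamma> = E0} =
        card {\<gamma>\<in>{\<gamma>\<in>Hs Q C t0 K. SIm S Q \<gamma> = KS}. En S e Q \<gamma> = E0}"
    by (rule poly_count) (use finHs GPQ in \<open>auto simp: G_def\<close>)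
  moreover have "card {\<gamma>\<in>{\<gamma>\<in>Hs P C t0 K. SIm S P \<gamma> = KS}. En S e P \<gamma> = E0} > 0"
    using g0H g0S finHs[of P] unfolding E0_def by (subst card_gt_0_iff) auto
  ultimately have "card {\<gamma>\<in>{\<gamma>\<in>Hs Q C t0 K. SIm S Q \<gamma> = KS}. En S e Q \<gamma> = E0} > 0" by simp
  then have "{\<gamma>\<in>{\<gamma>\<in>Hs Q C t0 K. SIm S Q \<gamma> = KS}. En S e Q \<gamma> = E0} \<noteq> {}"
    by (metis card.empty less_irrefl)
  then obtain \<gamma> where g: "\<gamma> \<in> Hs Q C t0 K" "SIm S Q \<gamma> = KS" "En S e Q \<gamma> = E0"
    by blast
  define Xm where "Xm = image_mset (amap \<gamma>) (nonS S (body Q))"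
  define Ym where "Ym = image_mset (amap c) (nonS S (body P))"
  have Ym0: "image_mset (amap \<gamma>0) (nonS S (body P)) = Ym"
    unfolding Ym_def nonS_def by (rule image_mset_cong) (use g0b in auto)
  have enX: "En S e Q \<gamma> = sum_mset (image_mset e Xm)"
    unfolding En_def Xm_def by (simp add: multiset.map_comp)
  have enY: "E0 = sum_mset (image_mset e Ym)"
    unfolding E0_def En_def Ym0[symmetric] by (simp add: multiset.map_comp)
  have XK: "set_mset Xm \<subseteq> K" using g(1) unfolding Xm_def Hs_def nonS_def by auto
  have YK: "set_mset Ym \<subseteq> K" unfolding Ym_def K_def nonS_def by auto
  have sX: "size Xm < Bs" unfolding Xm_def Bs_def nonS_def
    using size_filter_mset_lesseq[of _ "body Q"] by (simp add: le_imp_less_Suc trans_le_add2)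
  have sY: "size Ym < Bs" unfolding Ym_def Bs_def nonS_def
    using size_filter_mset_lesseq[of _ "body P"] by (simp add: le_imp_less_Suc trans_le_add1)
  have "(\<Sum>a\<in>K. count Xm a * Bs ^ idx a) = (\<Sum>a\<in>K. count Ym a * Bs ^ idx a)"
    using g(3) enX enY sum_mset_as_sum[OF finK XK, of e] sum_mset_as_sum[OF finK YK, of e]
    unfolding e_def by simp
  then have "\<forall>a\<in>K. count Xm a = count Ym a"
  proof -
    have "\<forall>a\<in>K. count Xm a < Bs \<and> count Ym a < Bs"
      using sX sY count_le_size le_less_trans by metis
    moreover have "Bs \<ge> 1" unfolding Bs_def by simp
    ultimately show ?thesis using digits_unique[OF _ finK idx, of Bs "count Xm" "count Ym"] \<open>(\<Sum>a\<in>K. count Xm a * Bs ^ idx a) = _\<close>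
      by blast
  qed
  have XY: "Xm = Ym"
  proof (rule multiset_eqI)
    fix a show "count Xm a = count Ym a"
    proof (cases "a \<in> K")
      case True then show ?thesis using \<open>\<forall>a\<in>K. count Xm a = count Ym a\<close> by blast
    next
      case False
      then have "a \<notin># Xm" "a \<notin># Ym" using XK YK by auto
      then show ?thesis by (simp add: not_in_iff)
    qed
  qed
  define h where "h = inv_into VP c \<circ> \<gamma>"
  have backm: "amap (inv_into VP c) (amap c b) = b" if "b \<in># body P" for b
    using bodyP_vars[OF that] c unfolding amap_def
    by (cases b) (auto intro!: map_idI simp: inv_into_f_f)
  have gQ: "\<gamma> \<in> cq_vars Q \<rightarrow>\<^sub>E C" "map \<gamma> (head Q) = t0" using g(1) unfolding Hs_def by auto
  show ?thesis
  proof (intro exI conjI)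
    show "h ` cq_vars Q \<subseteq> cq_vars P"
    proof
      fix y assume "y \<in> h ` cq_vars Q"
      then obtain x where x: "x \<in> cq_vars Q" "y = h x" by auto
      have "\<gamma> x \<in> c ` VP" using gQ(1) x(1) unfolding C_def by (auto simp: PiE_iff)
      then show "y \<in> cq_vars P" using x(2) unfolding h_def VP_def by (simp add: inv_into_into)
    qed
    show "map h (head Q) = head P"
    proof -
      have "map (inv_into VP c) (map c (head P)) = head P"
        using headP c by (auto intro!: map_idI simp: inv_into_f_f)
      then show ?thesis using gQ(2) unfolding h_def t0_def by (simp flip: map_map)
    qed
    have "image_mset (amap h) (nonS S (body Q)) = image_mset (amap (inv_into VP c)) Xm"
      unfolding Xm_def h_def multiset.map_comp by (rule image_mset_cong) (simp add: amap_def)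
    also have "\<dots> = image_mset (\<lambda>b. amap (inv_into VP c) (amap c b)) (nonS S (body P))"
      unfolding XY Ym_def by (simp add: multiset.map_comp comp_def)
    also have "\<dots> = image_mset id (nonS S (body P))"
      by (rule image_mset_cong) (use backm in \<open>auto simp: nonS_def\<close>)
    finally show "image_mset (amap h) (nonS S (body Q)) = nonS S (body P)" by simp
    have "amap h ` SAt S (body Q) = amap (inv_into VP c) ` KS"
      using g(2) unfolding SIm_def h_def by (auto simp: amap_comp image_image)
    also have "\<dots> = amap (inv_into VP c) ` amap c ` SAt S (body P)" using SAtP by simp
    also have "\<dots> = SAt S (body P)"
    proof -
      have "amap (inv_into VP c) ` amap c ` SAt S (body P) = (\<lambda>b. b) ` SAt S (body P)"
        unfolding image_image by (rule image_cong[OF refl]) (use backm in \<open>auto simp: SAt_def\<close>)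
      then show ?thesis by simp
    qed
    finally show "amap h ` SAt S (body Q) = SAt S (body P)" .
  qed
qed



lemma amap_case: "(\<lambda>(p, xs). (p, map f xs)) = amap f"
  by (auto simp: amap_def fun_eq_iff)

lemma body_dedup: "body (dedup S Q) = nonS S (body Q) + mset_set (SAt S (body Q))"
  unfolding dedup_def nonS_def SAt_def by simp

lemma head_dedup: "head (dedup S Q) = head Q"
  unfolding dedup_def by simp

lemma set_body_dedup: "set_mset (body (dedup S Q)) = set_mset (body Q)"
  unfolding body_dedup nonS_def SAt_def by auto

lemma vars_dedup: "cq_vars (dedup S Q) = cq_vars Q"
  unfolding cq_vars_def set_body_dedup by simp

lemma assignments_dedup: "assignments (dedup S Q) D = assignments Q D"
  unfolding assignments_def vars_dedup by simp

lemma prod_dedup: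
  fixes g :: "('r,'v) atom \<Rightarrow> nat"
  assumes "\<forall>b. fst b \<in> S \<longrightarrow> g b \<le> 1"
  shows "prod_mset (image_mset g (nonS S B + mset_set (SAt S B))) = prod_mset (image_mset g B)"
proof -
  have B: "B = nonS S B + filter_mset (\<lambda>b. fst b \<in> S) B"
    unfolding nonS_def by (metis multiset_partition union_commute)
  have sf: "set_mset (filter_mset (\<lambda>b. fst b \<in> S) B) = SAt S B" unfolding SAt_def by auto
  have "prod_mset (image_mset g (filter_mset (\<lambda>b. fst b \<in> S) B))
      = (\<Prod>x\<in>SAt S B. g x ^ count (filter_mset (\<lambda>b. fst b \<in> S) B) x)"
    unfolding image_prod_mset_multiplicity sf ..
  also have "\<dots> = (\<Prod>x\<in>SAt S B. g x)"
  proof (rule prod.cong[OF refl])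
    fix x assume x: "x \<in> SAt S B"
    then have "count (filter_mset (\<lambda>b. fst b \<in> S) B) x \<ge> 1" using sf
      by (simp add: Suc_le_eq SAt_def)
    moreover have "g x \<le> 1" using assms x unfolding SAt_def by blast
    ultimately show "g x ^ count (filter_mset (\<lambda>b. fst b \<in> S) B) x = g x"
      by (cases "g x = 0") (auto simp: power_0_left le_Suc_eq)
  qed
  also have "\<dots> = prod_mset (image_mset g (mset_set (SAt S B)))"
    by (rule prod_unfold_prod_mset)
  finally have "prod_mset (image_mset g (filter_mset (\<lambda>b. fst b \<in> S) B)) = prod_mset (image_mset g (mset_set (SAt S B)))" .
  then show ?thesis by (subst (2) B) simp
qed

lemma dedup_answer:
  fixes Q :: "('r,'v) cq" and D :: "('r,'c) inst"
  assumes "set_valued_on S D"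
  shows "bag_answer (dedup S Q) D = bag_answer Q D"
proof
  fix t
  show "bag_answer (dedup S Q) D t = bag_answer Q D t"
    unfolding bag_answer_def assignments_dedup head_dedup
  proof (rule sum.cong[OF refl])
    fix \<gamma> :: "'v \<Rightarrow> 'c"
    have le1: "\<forall>b. fst b \<in> S \<longrightarrow> (\<lambda>(p, xs). D p (map \<gamma> xs)) b \<le> 1"
      using assms unfolding set_valued_on_def by auto
    then show "(if map \<gamma> (head Q) = t then prod_mset (image_mset (\<lambda>(p, xs). D p (map \<gamma> xs)) (body (dedup S Q))) else 0) =
          (if map \<gamma> (head Q) = t then prod_mset (image_mset (\<lambda>(p, xs). D p (map \<gamma> xs)) (body Q)) else 0)"
      unfolding body_dedup using prod_dedup[OF le1] by simp
  qed
qed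

lemma iso_answer:
  fixes Q1 Q2 :: "('r,'v) cq" and D :: "('r,'c) inst"
  assumes iso: "cq_iso Q1 Q2" and hd: "set (head Q1) \<subseteq> cq_vars Q1"
  shows "bag_answer Q1 D = bag_answer Q2 D"
proof
  fix t
  obtain f where f: "inj_on f (cq_vars Q1)" "map f (head Q1) = head Q2"
    "image_mset (amap f) (body Q1) = body Q2"
    using iso unfolding cq_iso_def amap_case by blast
  define V1 where "V1 = cq_vars Q1"
  define V2 where "V2 = cq_vars Q2"
  define A where "A = adom D"
  have V2: "V2 = f ` V1"
  proof -
    have "set_mset (body Q2) = amap f ` set_mset (body Q1)" using f(3) by (metis set_image_mset)
    then show ?thesis unfolding V1_def V2_def cq_vars_def by (auto simp: amap_def)
  qed
  define \<phi> where "\<phi> = (\<lambda>\<gamma>::'v\<Rightarrow>'c. restrict (\<gamma> \<circ> f) V1)"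
  define \<psi> where "\<psi> = (\<lambda>\<delta>::'v\<Rightarrow>'c. restrict (\<delta> \<circ> inv_into V1 f) V2)"
  have bij: "bij_betw \<phi> (V2 \<rightarrow>\<^sub>E A) (V1 \<rightarrow>\<^sub>E A)"
  proof (rule bij_betwI)
    show "\<phi> \<in> (V2 \<rightarrow>\<^sub>E A) \<rightarrow> (V1 \<rightarrow>\<^sub>E A)" unfolding \<phi>_def V2 by (auto simp: PiE_iff)
    show "\<psi> \<in> (V1 \<rightarrow>\<^sub>E A) \<rightarrow> (V2 \<rightarrow>\<^sub>E A)" unfolding \<psi>_def V2 by (auto simp: PiE_iff inv_into_into)
    fix \<gamma> assume g: "\<gamma> \<in> V2 \<rightarrow>\<^sub>E A"
    show "\<psi> (\<phi> \<gamma>) = \<gamma>"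
    proof
      fix y show "\<psi> (\<phi> \<gamma>) y = \<gamma> y"
      proof (cases "y \<in> f ` V1")
        case True
        have "inv_into V1 f y \<in> V1" by (rule inv_into_into[OF True])
        then show ?thesis by (simp add: \<psi>_def \<phi>_def V2 True f_inv_into_f[OF True])
      next
        case False
        then show ?thesis using PiE_arb[OF g] by (simp add: \<psi>_def V2)
      qed
    qed
  next
    fix \<delta> assume d: "\<delta> \<in> V1 \<rightarrow>\<^sub>E A"
    show "\<phi> (\<psi> \<delta>) = \<delta>"
    proof
      fix x show "\<phi> (\<psi> \<delta>) x = \<delta> x"
      proof (cases "x \<in> V1")
        case True
        have "inv_into V1 f (f x) = x" using f(1) True unfolding V1_def by (simp add: inv_into_f_f)
        then show ?thesis using True by (simp add: \<psi>_def \<phi>_def V2)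
      next
        case False
        then show ?thesis using PiE_arb[OF d] by (simp add: \<phi>_def)
      qed
    qed
  qed
  have termeq: "(if map (\<phi> \<gamma>) (head Q1) = t then prod_mset (image_mset (\<lambda>(p,xs). D p (map (\<phi> \<gamma>) xs)) (body Q1)) else 0)
    = (if map \<gamma> (head Q2) = t then prod_mset (image_mset (\<lambda>(p,xs). D p (map \<gamma> xs)) (body Q2)) else 0)" for \<gamma>
  proof -
    have h: "map (\<phi> \<gamma>) (head Q1) = map \<gamma> (head Q2)"
      using hd unfolding f(2)[symmetric] \<phi>_def V1_def by (auto intro!: map_cong)
    have "image_mset (\<lambda>(p,xs). D p (map (\<phi> \<gamma>) xs)) (body Q1) = image_mset (\<lambda>(p,xs). D p (map \<gamma> xs)) (image_mset (amap f) (body Q1))"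
      unfolding multiset.map_comp
    proof (rule image_mset_cong)
      fix b assume "b \<in># body Q1"
      then have "set (snd b) \<subseteq> V1" unfolding V1_def cq_vars_def by auto
      then show "(\<lambda>(p,xs). D p (map (\<phi> \<gamma>) xs)) b = ((\<lambda>(p,xs). D p (map \<gamma> xs)) \<circ> amap f) b"
        unfolding \<phi>_def amap_def by (cases b) (auto intro!: arg_cong[where f="D _"] map_cong)
    qed
    then show ?thesis using h f(3) by simp
  qed
  have "bag_answer Q1 D t = (\<Sum>\<delta>\<in>V1 \<rightarrow>\<^sub>E A. if map \<delta> (head Q1) = t then prod_mset (image_mset (\<lambda>(p,xs). D p (map \<delta> xs)) (body Q1)) else 0)"
    unfolding bag_answer_def assignments_PiE V1_def A_def ..
  also have "\<dots> = (\<Sum>\<gamma>\<in>V2 \<rightarrow>\<^sub>E A. if map (\<phi> \<gamma>) (head Q1) = t then prod_mset (image_mset (\<lambda>(p,xs). D p (map (\<phi> \<gamma>) xs)) (body Q1)) else 0)"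
    by (rule sum.reindex_bij_betw[OF bij, symmetric])
  also have "\<dots> = bag_answer Q2 D t"
    unfolding bag_answer_def assignments_PiE V2_def A_def termeq ..
  finally show "bag_answer Q1 D t = bag_answer Q2 D t" .
qed



lemma cover:
  assumes "image_mset (amap h) (nonS S (body Q)) = nonS S (body P)"
    and "amap h ` SAt S (body Q) = SAt S (body P)"
  shows "cq_vars P \<subseteq> h ` cq_vars Q"
proof
  fix x assume "x \<in> cq_vars P"
  then obtain a where a: "a \<in># body P" "x \<in> set (snd a)" unfolding cq_vars_def by auto
  have "\<exists>b. b \<in># body Q \<and> a = amap h b"
  proof (cases "fst a \<in> S")
    case True
    then have "a \<in> amap h ` SAt S (body Q)" using assms(2) a(1) unfolding SAt_def by auto
    then show ?thesis unfolding SAt_def by auto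
  next
    case False
    then have "a \<in># image_mset (amap h) (nonS S (body Q))" using assms(1) a(1) unfolding nonS_def by auto
    then show ?thesis unfolding nonS_def by auto
  qed
  then obtain b where b: "b \<in># body Q" "a = amap h b" by blast
  then have "x \<in> h ` set (snd b)" using a(2) unfolding amap_def by auto
  moreover have "set (snd b) \<subseteq> cq_vars Q" using b(1) unfolding cq_vars_def by auto
  ultimately show "x \<in> h ` cq_vars Q" by blast
qed

theorem theorem4p2:
  fixes Sch :: "'r set" and ar :: "'r \<Rightarrow> nat" and S :: "'r set"
    and Q1 Q2 :: "('r,'v) cq"
  assumes "infinite (UNIV :: 'c set)"
    and "S \<subseteq> Sch"
    and "cq_over Sch ar Q1" and "cq_over Sch ar Q2"
  shows "(\<forall>D :: ('r,'c) inst. instance_over Sch ar D \<and> set_valued_on S D \<longrightarrow>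
            bag_answer Q1 D = bag_answer Q2 D)
         \<longleftrightarrow> cq_iso (dedup S Q1) (dedup S Q2)"
proof
  assume H: "\<forall>D :: ('r,'c) inst. instance_over Sch ar D \<and> set_valued_on S D \<longrightarrow>
            bag_answer Q1 D = bag_answer Q2 D"
  obtain h2 where h2: "h2 ` cq_vars Q2 \<subseteq> cq_vars Q1" "map h2 (head Q2) = head Q1"
     "image_mset (amap h2) (nonS S (body Q2)) = nonS S (body Q1)" "amap h2 ` SAt S (body Q2) = SAt S (body Q1)"
    using extract_hom[OF assms(1) assms(3) H] by blast
  have H': "\<forall>D :: ('r,'c) inst. instance_over Sch ar D \<and> set_valued_on S D \<longrightarrow>
            bag_answer Q2 D = bag_answer Q1 D" using H by simp
  obtain h1 where h1: "h1 ` cq_vars Q1 \<subseteq> cq_vars Q2" "map h1 (head Q1) = head Q2"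
     "image_mset (amap h1) (nonS S (body Q1)) = nonS S (body Q2)" "amap h1 ` SAt S (body Q1) = SAt S (body Q2)"
    using extract_hom[OF assms(1) assms(4) H'] by blast
  have i2: "h2 ` cq_vars Q2 = cq_vars Q1" using h2(1) cover[OF h2(3) h2(4)] by blast
  have i1: "h1 ` cq_vars Q1 = cq_vars Q2" using h1(1) cover[OF h1(3) h1(4)] by blast
  have c1: "card (cq_vars Q1) \<le> card (cq_vars Q2)"
    using i2 card_image_le[OF finite_cq_vars, of h2 Q2] by simp
  have c2: "card (cq_vars Q2) \<le> card (cq_vars Q1)"
    using i1 card_image_le[OF finite_cq_vars, of h1 Q1] by simp
  have inj: "inj_on h1 (cq_vars Q1)"
    by (rule eq_card_imp_inj_on[OF finite_cq_vars]) (use i1 c1 c2 in simp)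
  have injA: "inj_on (amap h1) (SAt S (body Q1))"
  proof (rule inj_onI)
    fix a b assume ab: "a \<in> SAt S (body Q1)" "b \<in> SAt S (body Q1)" "amap h1 a = amap h1 b"
    have sub: "set (snd a) \<union> set (snd b) \<subseteq> cq_vars Q1" using ab(1,2) unfolding SAt_def cq_vars_def by auto
    have "fst a = fst b" "map h1 (snd a) = map h1 (snd b)" using ab(3) unfolding amap_def by auto
    moreover have "snd a = snd b"
      using inj_on_map_eq_map[OF inj_on_subset[OF inj sub]] \<open>map h1 (snd a) = map h1 (snd b)\<close> by simp
    ultimately show "a = b" by (simp add: prod_eq_iff)
  qed
  show "cq_iso (dedup S Q1) (dedup S Q2)"
    unfolding cq_iso_def vars_dedup head_dedup body_dedup amap_case
  proof (intro exI conjI)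
    show "inj_on h1 (cq_vars Q1)" by (rule inj)
    show "map h1 (head Q1) = head Q2" by (rule h1(2))
    show "image_mset (amap h1) (nonS S (body Q1) + mset_set (SAt S (body Q1))) =
          nonS S (body Q2) + mset_set (SAt S (body Q2))"
      using h1(3) h1(4) image_mset_mset_set[OF injA] by simp
  qed
next
  assume iso: "cq_iso (dedup S Q1) (dedup S Q2)"
  have hd: "set (head (dedup S Q1)) \<subseteq> cq_vars (dedup S Q1)"
    using assms(3) unfolding cq_over_def head_dedup vars_dedup by simp
  show "\<forall>D :: ('r,'c) inst. instance_over Sch ar D \<and> set_valued_on S D \<longrightarrow>
            bag_answer Q1 D = bag_answer Q2 D"
  proof (intro allI impI)
    fix D :: "('r,'c) inst" assume "instance_over Sch ar D \<and> set_valued_on S D"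
    then have sv: "set_valued_on S D" by simp
    have "bag_answer Q1 D = bag_answer (dedup S Q1) D" by (rule dedup_answer[OF sv, symmetric])
    also have "\<dots> = bag_answer (dedup S Q2) D" by (rule iso_answer[OF iso hd])
    also have "\<dots> = bag_answer Q2 D" by (rule dedup_answer[OF sv])
    finally show "bag_answer Q1 D = bag_answer Q2 D" .
  qed
qed


end
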